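(* Let $E$ be a finite-dimensional quantum system, $T$ a qubit register with computational basis $\{\ket{0},\ket{1}\}$, and for $a,b\in\{0,1\}$ let $\sigma_{E|ab}$ be density operators on $E$. For $a,b\in\{0,1\}$ define $$\rho_{ET|ab}=\tfrac12\,\sigma_{E|ab}\otimes\ket{0}\!\bra{0}_T+\tfrac12\,\sigma_{E|\overline a\,\overline b}\otimes\ket{1}\!\bra{1}_T,$$ where $\overline a=a\oplus 1$, $\overline b=b\oplus1$. Fix a block size $k\ge1$, let $\mathbf{ET}=E_1T_1\cdots E_kT_k$ denote $k$ copies of $ET$, and for a string $\mathbf m=(m_1,\dots,m_k)\in\{0,1\}^k$ with bitwise complement $\overline{\mathbf m}$ define $$\rho_{\mathbf{ET}|\mathbf{mm}}=\rho_{ET|m_1m_1}\otimes\cdots\otimes\rho_{ET|m_km_k},\qquad \rho_{\mathbf{ET}|\overline{\mathbf m}\,\overline{\mathbf m}}=\rho_{ET|\overline{m_1}\,\overline{m_1}}\otimes\cdots\otimes\rho_{ET|\overline{m_k}\,\overline{m_k}}.$$ Define the classical-quantum states on a classical bit register $C$ and $\mathbf{ET}$: $$\widetilde\rho_{C\mathbf{ET}}=\tfrac12\ket{0}\!\bra{0}_C\otimes\rho_{\mathbf{ET}|\mathbf{mm}}+\tfrac12\ket{1}\!\bra{1}_C\otimes\rho_{\mathbf{ET}|\overline{\mathbf m}\,\overline{\mathbf m}},\qquad \overline\rho_{C\mathbf{ET}}=\tfrac12\ket{0}\!\bra{0}_C\otimes\rho_{ET|00}^{\otimes k}+\tfrac12\ket{1}\!\bra{1}_C\otimes\rho_{ET|11}^{\otimes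 k}.$$ Then for every $\mathbf m\in\{0,1\}^k$, $H(C|\mathbf{ET})_{\widetilde\rho}=H(C|\mathbf{ET})_{\overline\rho}$.
   Context: $H(C|\mathbf{ET})_\rho=H(C\mathbf{ET})_\rho-H(\mathbf{ET})_\rho$ denotes the conditional von Neumann entropy of the state $\rho$. *)

theory Defs
  imports "Jordan_Normal_Form.Jordan_Normal_Form"
begin

text \<open>Operators on finite-dimensional Hilbert spaces are complex square matrices.
  Tensor products are Kronecker products; a register of dimension n has basis indices 0..n-1.\<close>

definition kron :: "complex mat \<Rightarrow> complex mat \<Rightarrow> complex mat" where
  "kron A B = mat (dim_row A * dim_row B) (dim_col A * dim_col B)
     (\<lambda>(i, j). A $$ (i div dim_row B, j div dim_col B) * B $$ (i mod dim_row B, j mod dim_col B))"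

definition kron_list :: "complex mat list \<Rightarrow> complex mat" where
  "kron_list As = foldr kron As (1\<^sub>m 1)"

definition mat_trace :: "complex mat \<Rightarrow> complex" where
  "mat_trace A = (\<Sum>i<dim_row A. A $$ (i, i))"

definition density_op :: "nat \<Rightarrow> complex mat \<Rightarrow> bool" where
  "density_op n A \<longleftrightarrow> A \<in> carrier_mat n n
     \<and> (\<forall>i<n. \<forall>j<n. A $$ (i, j) = cnj (A $$ (j, i)))
     \<and> (\<forall>v. dim_vec v = n \<longrightarrow>
           (let q = (\<Sum>i<n. cnj (v $ i) * (A *\<^sub>v v) $ i) in Im q = 0 \<and> Re q \<ge> 0))
     \<and> mat_trace A = 1"

definition eigvals_list :: "complex mat \<Rightarrow> complex list" where
  "eigvals_list A = (SOME es. char_poly A = (\<Prod>e\<leftarrow>es. [:- e, 1:]))"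

definition vn_entropy :: "complex mat \<Rightarrow> real" where
  "vn_entropy A = - (\<Sum>e\<leftarrow>eigvals_list A. if Re e = 0 then 0 else Re e * log 2 (Re e))"

definition ptrace_first :: "nat \<Rightarrow> complex mat \<Rightarrow> complex mat" where
  "ptrace_first dA M = (let dB = dim_row M div dA in
     mat dB dB (\<lambda>(i, j). \<Sum>a<dA. M $$ (a * dB + i, a * dB + j)))"

definition cond_entropy :: "nat \<Rightarrow> complex mat \<Rightarrow> real" where
  "cond_entropy dC M = vn_entropy M - vn_entropy (ptrace_first dC M)"

definition proj0 :: "complex mat" where
  "proj0 = mat 2 2 (\<lambda>(i, j). if i = 0 \<and> j = 0 then 1 else 0)"
definition proj1 :: "complex mat" where
  "proj1 = mat 2 2 (\<lambda>(i, j). if i = 1 \<and> j = 1 then 1 else 0)"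

text \<open>Bits are booleans (True = 1); complement is negation.
  rho_ET sigma a b = 1/2 sigma_ab \<otimes> |0><0|_T + 1/2 sigma_{~a ~b} \<otimes> |1><1|_T.\<close>
definition rho_ET :: "(bool \<Rightarrow> bool \<Rightarrow> complex mat) \<Rightarrow> bool \<Rightarrow> bool \<Rightarrow> complex mat" where
  "rho_ET \<sigma> a b = (1/2) \<cdot>\<^sub>m kron (\<sigma> a b) proj0 + (1/2) \<cdot>\<^sub>m kron (\<sigma> (\<not> a) (\<not> b)) proj1"

definition rho_tilde :: "(bool \<Rightarrow> bool \<Rightarrow> complex mat) \<Rightarrow> bool list \<Rightarrow> complex mat" where
  "rho_tilde \<sigma> ms =
     (1/2) \<cdot>\<^sub>m kron proj0 (kron_list (map (\<lambda>m. rho_ET \<sigma> m m) ms))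
   + (1/2) \<cdot>\<^sub>m kron proj1 (kron_list (map (\<lambda>m. rho_ET \<sigma> (\<not> m) (\<not> m)) ms))"

definition rho_bar :: "(bool \<Rightarrow> bool \<Rightarrow> complex mat) \<Rightarrow> nat \<Rightarrow> complex mat" where
  "rho_bar \<sigma> k =
     (1/2) \<cdot>\<^sub>m kron proj0 (kron_list (replicate k (rho_ET \<sigma> False False)))
   + (1/2) \<cdot>\<^sub>m kron proj1 (kron_list (replicate k (rho_ET \<sigma> True True)))"

end

theory Submission
  imports Defs
begin

lemma sum_div_mod_split:
  fixes f :: "nat \<Rightarrow> 'a::comm_monoid_add"
  shows "(\<Sum>k<a*b. f k) = (\<Sum>x<a. \<Sum>y<b. f (x*b+y))"
proof (induction a)
  case 0 then show ?case by simp
next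
  case (Suc a)
  have "(\<Sum>k<Suc a*b. f k) = sum f ({..<a*b} \<union> {a*b..<a*b+b})"
    by (rule arg_cong[where f="sum f"]) auto
  also have "\<dots> = (\<Sum>k<a*b. f k) + (\<Sum>k\<in>{a*b..<a*b+b}. f k)"
    by (rule sum.union_disjoint) auto
  also have "(\<Sum>k\<in>{a*b..<a*b+b}. f k) = (\<Sum>y<b. f (a*b+y))"
    using sum.shift_bounds_nat_ivl[of f 0 "a*b" b] by (simp add: atLeast0LessThan add.commute)
  finally show ?case using Suc by simp
qed

lemma kron_carrier[simp]: "kron A B \<in> carrier_mat (dim_row A * dim_row B) (dim_col A * dim_col B)"
  by (simp add: kron_def)
lemma dim_kron[simp]: "dim_row (kron A B) = dim_row A * dim_row B" "dim_col (kron A B) = dim_col A * dim_col B"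
  by (simp_all add: kron_def)
lemma index_kron: "i < dim_row A * dim_row B \<Longrightarrow> j < dim_col A * dim_col B \<Longrightarrow>
  kron A B $$ (i,j) = A $$ (i div dim_row B, j div dim_col B) * B $$ (i mod dim_row B, j mod dim_col B)"
  by (simp add: kron_def)

lemma kron_mult:
  assumes A: "A \<in> carrier_mat n1 k1" and B: "B \<in> carrier_mat n2 k2"
    and C: "C \<in> carrier_mat k1 m1" and D: "D \<in> carrier_mat k2 m2"
  shows "kron A B * kron C D = kron (A*C) (B*D)"
proof (rule eq_matI)
  fix i j assume i: "i < dim_row (kron (A*C) (B*D))" and j: "j < dim_col (kron (A*C) (B*D))"
  from i j A B C D have i': "i < n1*n2" and j': "j < m1*m2" by auto
  then have n2: "n2 > 0" and m2: "m2 > 0" by (auto intro: gr0I)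
  have id: "i div n2 < n1" "j div m2 < m1" using i' j' n2 m2
    by (simp_all add: less_mult_imp_div_less)
  have "(kron A B * kron C D) $$ (i,j) = (\<Sum>k<k1*k2. kron A B $$ (i,k) * kron C D $$ (k,j))"
    using A B C D i' j' by (simp add: scalar_prod_def atLeast0LessThan)
  also have "\<dots> = (\<Sum>x<k1. \<Sum>y<k2. kron A B $$ (i,x*k2+y) * kron C D $$ (x*k2+y,j))"
    by (rule sum_div_mod_split)
  also have "\<dots> = (\<Sum>x<k1. \<Sum>y<k2. (A $$ (i div n2, x) * C $$ (x, j div m2)) * (B $$ (i mod n2, y) * D $$ (y, j mod m2)))"
  proof (intro sum.cong refl)
    fix x y assume x: "x \<in> {..<k1}" and y: "y \<in> {..<k2}"
    have "x*k2+y < (x+1)*k2" using y by simp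
    also have "\<dots> \<le> k1*k2" using x by (intro mult_right_mono) auto
    finally have "x*k2+y < k1*k2" .
    then show "kron A B $$ (i,x*k2+y) * kron C D $$ (x*k2+y,j) = (A $$ (i div n2, x) * C $$ (x, j div m2)) * (B $$ (i mod n2, y) * D $$ (y, j mod m2))"
      using A B C D i' j' x y by (simp add: index_kron algebra_simps)
  qed
  also have "\<dots> = (\<Sum>x<k1. A $$ (i div n2, x) * C $$ (x, j div m2)) * (\<Sum>y<k2. B $$ (i mod n2, y) * D $$ (y, j mod m2))"
    by (simp add: sum_product)
  also have "\<dots> = kron (A*C) (B*D) $$ (i,j)"
    using A B C D i' j' id n2 m2 by (simp add: index_kron scalar_prod_def atLeast0LessThan)
  finally show "(kron A B * kron C D) $$ (i,j) = kron (A*C) (B*D) $$ (i,j)" .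
qed (use A B C D in auto)


lemma kron_add_left: "A \<in> carrier_mat n m \<Longrightarrow> B \<in> carrier_mat n m \<Longrightarrow> kron (A + B) C = kron A C + kron B C"
  by (rule eq_matI) (auto simp: index_kron less_mult_imp_div_less algebra_simps)
lemma kron_add_right: assumes "B \<in> carrier_mat n m" "C \<in> carrier_mat n m" shows "kron A (B + C) = kron A B + kron A C"
proof (rule eq_matI)
  fix i j assume "i < dim_row (kron A B + kron A C)" "j < dim_col (kron A B + kron A C)"
  with assms have i: "i < dim_row A * n" and j: "j < dim_col A * m" by auto
  then have "n > 0" "m > 0" by (auto intro: gr0I)
  then show "kron A (B + C) $$ (i, j) = (kron A B + kron A C) $$ (i, j)"
    using i j assms by (auto simp: index_kron algebra_simps)
qed (use assms in auto)
lemma kron_smult_left: "kron (c \<cdot>\<^sub>m A) B = c \<cdot>\<^sub>m kron A B"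
  by (rule eq_matI) (auto simp: index_kron less_mult_imp_div_less)
lemma kron_smult_right: "kron A (c \<cdot>\<^sub>m B) = c \<cdot>\<^sub>m kron A B"
proof (rule eq_matI)
  fix i j assume "i < dim_row (c \<cdot>\<^sub>m kron A B)" "j < dim_col (c \<cdot>\<^sub>m kron A B)"
  then have i: "i < dim_row A * dim_row B" and j: "j < dim_col A * dim_col B" by auto
  then have "dim_row B > 0" "dim_col B > 0" by (auto intro: gr0I)
  then show "kron A (c \<cdot>\<^sub>m B) $$ (i, j) = (c \<cdot>\<^sub>m kron A B) $$ (i, j)"
    using i j by (auto simp: index_kron)
qed auto

lemma kron_one: "kron (1\<^sub>m a) (1\<^sub>m b) = 1\<^sub>m (a*b)"
proof (rule eq_matI)
  fix i j assume "i < dim_row (1\<^sub>m (a*b) :: complex mat)" "j < dim_col (1\<^sub>m (a*b) :: complex mat)"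
  then have i: "i < a*b" and j: "j < a*b" by auto
  then have b: "b > 0" by (auto intro: gr0I)
  have "i div b < a" "j div b < a" using i j by (auto simp: less_mult_imp_div_less)
  moreover have "i mod b < b" "j mod b < b" using b by auto
  have eq: "i = j" if "i div b = j div b" "i mod b = j mod b"
  proof -
    have "i = i div b * b + i mod b" by simp
    also have "\<dots> = j div b * b + j mod b" using that by simp
    also have "\<dots> = j" by simp
    finally show ?thesis .
  qed
  ultimately have "i div b < a" "j div b < a" "i mod b < b" "j mod b < b" using b by auto
  have k: "kron (1\<^sub>m a) (1\<^sub>m b) $$ (i, j) = (1\<^sub>m a :: complex mat) $$ (i div b, j div b) * (1\<^sub>m b :: complex mat) $$ (i mod b, j mod b)"
    using i j by (simp add: index_kron)
  show "kron (1\<^sub>m a) (1\<^sub>m b) $$ (i, j) = (1\<^sub>m (a*b) :: complex mat) $$ (i, j)"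
  proof (cases "i = j")
    case True then show ?thesis using k i j \<open>i div b < a\<close> \<open>i mod b < b\<close> by simp
  next
    case False
    then have "i div b \<noteq> j div b \<or> i mod b \<noteq> j mod b" using eq by blast
    then show ?thesis using k i j \<open>i div b < a\<close> \<open>i mod b < b\<close> \<open>j div b < a\<close> \<open>j mod b < b\<close> False by auto
  qed
qed auto

lemma kron_list_Cons[simp]: "kron_list (A # As) = kron A (kron_list As)"
  by (simp add: kron_list_def)
lemma kron_list_Nil[simp]: "kron_list [] = 1\<^sub>m 1"
  by (simp add: kron_list_def)

lemma kron_list_carrier:
  assumes "\<And>m. f m \<in> carrier_mat n n"
  shows "kron_list (map f ms) \<in> carrier_mat (n ^ length ms) (n ^ length ms)"
proof (induction ms)
  case Nil then show ?case by simp
next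
  case (Cons m ms)
  have a: "dim_row (f m) = n" "dim_col (f m) = n" using assms[of m] by (auto dest: carrier_matD)
  have b: "dim_row (kron_list (map f ms)) = n ^ length ms" "dim_col (kron_list (map f ms)) = n ^ length ms"
    using Cons.IH by (auto dest: carrier_matD)
  show ?case
    by (rule carrier_matI) (simp_all only: list.map kron_list_Cons dim_kron a b length_Cons power_Suc)
qed

lemma kron_list_mult:
  assumes f: "\<And>m. f m \<in> carrier_mat n n" and g: "\<And>m. g m \<in> carrier_mat n n"
  shows "kron_list (map f ms) * kron_list (map g ms) = kron_list (map (\<lambda>m. f m * g m) ms)"
proof (induction ms)
  case Nil then show ?case by simp
next
  case (Cons m ms)
  show ?case
    using kron_mult[OF f[of m] kron_list_carrier[OF f, where ms=ms] g[of m] kron_list_carrier[OF g, where ms=ms]] Cons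
    by (simp only: list.map kron_list_Cons)
qed

lemma kron_list_one: "kron_list (map (\<lambda>_. 1\<^sub>m n) ms) = 1\<^sub>m (n ^ length ms)"
proof (induction ms)
  case Nil then show ?case by simp
next
  case (Cons m ms)
  then show ?case by (simp add: kron_one)
qed

definition Xm :: "complex mat" where "Xm = mat 2 2 (\<lambda>(i,j). if i = j then 0 else 1)"

lemma Xm_carrier[simp]: "Xm \<in> carrier_mat 2 2" by (simp add: Xm_def)
lemma proj0_carrier[simp]: "proj0 \<in> carrier_mat 2 2" by (simp add: proj0_def)
lemma proj1_carrier[simp]: "proj1 \<in> carrier_mat 2 2" by (simp add: proj1_def)

lemma less2: "(i::nat) < 2 \<longleftrightarrow> i = 0 \<or> i = 1" by auto

lemma sum_2: "(\<Sum>i = (0::nat)..<2. f i) = f 0 + (f 1 :: complex)"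
  by (simp add: numeral_2_eq_2)

lemma Xm_Xm: "Xm * Xm = 1\<^sub>m 2"
  by (rule eq_matI) (auto simp: Xm_def scalar_prod_def less2 sum_2)
lemma Xm_proj0: "Xm * proj0 * Xm = proj1"
  by (rule eq_matI) (auto simp: Xm_def proj0_def proj1_def scalar_prod_def less2 sum_2)
lemma Xm_proj1: "Xm * proj1 * Xm = proj0"
  by (rule eq_matI) (auto simp: Xm_def proj0_def proj1_def scalar_prod_def less2 sum_2)


definition Um :: "nat \<Rightarrow> bool \<Rightarrow> complex mat" where
  "Um d m = (if m then kron (1\<^sub>m d) Xm else 1\<^sub>m (d*2))"

lemma Um_carrier: "Um d m \<in> carrier_mat (d*2) (d*2)"
proof -
  have a: "dim_row Xm = 2" "dim_col Xm = 2" by (simp_all add: Xm_def)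
  have "kron (1\<^sub>m d) Xm \<in> carrier_mat (dim_row (1\<^sub>m d :: complex mat) * dim_row Xm) (dim_col (1\<^sub>m d :: complex mat) * dim_col Xm)"
    by (rule kron_carrier)
  then have "kron (1\<^sub>m d) Xm \<in> carrier_mat (d*2) (d*2)" unfolding a index_one_mat(2) index_one_mat(3) .
  then show ?thesis unfolding Um_def by (cases m) (simp_all only: if_True if_False one_carrier_mat)
qed

lemma Um_Um: "Um d m * Um d m = 1\<^sub>m (d*2)"
proof (cases m)
  case True
  have "kron (1\<^sub>m d) Xm * kron (1\<^sub>m d) Xm = kron (1\<^sub>m d * 1\<^sub>m d) (Xm * Xm)"
    by (rule kron_mult[OF one_carrier_mat Xm_carrier one_carrier_mat Xm_carrier])
  also have "\<dots> = 1\<^sub>m (d*2)" unfolding Xm_Xm left_mult_one_mat[OF one_carrier_mat] kron_one ..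
  finally show ?thesis using True by (simp add: Um_def)
qed (simp add: Um_def)

lemma conj_lin:
  fixes U K1 K2 :: "complex mat"
  assumes U: "U \<in> carrier_mat n n" and K1: "K1 \<in> carrier_mat n n" and K2: "K2 \<in> carrier_mat n n"
  shows "U * (c \<cdot>\<^sub>m K1 + e \<cdot>\<^sub>m K2) * U = c \<cdot>\<^sub>m (U * K1 * U) + e \<cdot>\<^sub>m (U * K2 * U)"
proof -
  have "U * (c \<cdot>\<^sub>m K1 + e \<cdot>\<^sub>m K2) = U * (c \<cdot>\<^sub>m K1) + U * (e \<cdot>\<^sub>m K2)"
    by (rule mult_add_distrib_mat[OF U smult_carrier_mat[OF K1] smult_carrier_mat[OF K2]])
  also have "\<dots> = c \<cdot>\<^sub>m (U * K1) + e \<cdot>\<^sub>m (U * K2)"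
    unfolding mult_smult_distrib[OF U K1] mult_smult_distrib[OF U K2] ..
  finally have 1: "U * (c \<cdot>\<^sub>m K1 + e \<cdot>\<^sub>m K2) = c \<cdot>\<^sub>m (U * K1) + e \<cdot>\<^sub>m (U * K2)" .
  have UK1: "U * K1 \<in> carrier_mat n n" and UK2: "U * K2 \<in> carrier_mat n n"
    using mult_carrier_mat[OF U K1] mult_carrier_mat[OF U K2] .
  have "(c \<cdot>\<^sub>m (U * K1) + e \<cdot>\<^sub>m (U * K2)) * U = (c \<cdot>\<^sub>m (U * K1)) * U + (e \<cdot>\<^sub>m (U * K2)) * U"
    by (rule add_mult_distrib_mat[OF smult_carrier_mat[OF UK1] smult_carrier_mat[OF UK2] U])
  also have "\<dots> = c \<cdot>\<^sub>m (U * K1 * U) + e \<cdot>\<^sub>m (U * K2 * U)"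
    unfolding mult_smult_assoc_mat[OF UK1 U] mult_smult_assoc_mat[OF UK2 U] ..
  finally show ?thesis unfolding 1 .
qed

lemma kron_conj:
  assumes V: "V \<in> carrier_mat a a" and A: "A \<in> carrier_mat a a" and W: "W \<in> carrier_mat b b" and B: "B \<in> carrier_mat b b"
  shows "kron V W * kron A B * kron V W = kron (V * A * V) (W * B * W)"
  unfolding kron_mult[OF V W A B] kron_mult[OF mult_carrier_mat[OF V A] mult_carrier_mat[OF W B] V W] ..

lemma kron_carrier':
  assumes A: "A \<in> carrier_mat a b" and B: "B \<in> carrier_mat c e"
  shows "kron A B \<in> carrier_mat (a*c) (b*e)"
proof -
  have d: "dim_row A = a" "dim_col A = b" "dim_row B = c" "dim_col B = e"
    using A B by (auto dest: carrier_matD)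
  show ?thesis using kron_carrier[of A B] unfolding d .
qed

lemma rho_ET_carrier:
  assumes sig: "\<And>a b. \<sigma> a b \<in> carrier_mat d d"
  shows "rho_ET \<sigma> a b \<in> carrier_mat (d*2) (d*2)"
  unfolding rho_ET_def
  by (rule add_carrier_mat[OF smult_carrier_mat[OF kron_carrier'[OF sig proj1_carrier]]])

lemma Um_rho:
  assumes sig: "\<And>a b. \<sigma> a b \<in> carrier_mat d d"
  shows "Um d m * rho_ET \<sigma> False False * Um d m = rho_ET \<sigma> m m"
    and "Um d m * rho_ET \<sigma> True True * Um d m = rho_ET \<sigma> (\<not>m) (\<not>m)"
proof -
  have k: "kron (1\<^sub>m d) Xm * kron (\<sigma> a b) P * kron (1\<^sub>m d) Xm = kron (\<sigma> a b) (Xm * P * Xm)"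
    if P: "P \<in> carrier_mat 2 2" for a b P
    using kron_conj[OF one_carrier_mat sig Xm_carrier P]
    unfolding left_mult_one_mat[OF sig] right_mult_one_mat[OF sig] .
  have c1: "kron (\<sigma> a b) P \<in> carrier_mat (d*2) (d*2)" if "P \<in> carrier_mat 2 2" for a b P
    by (rule kron_carrier'[OF sig that])
  have gen: "Um d True * rho_ET \<sigma> a a * Um d True = rho_ET \<sigma> (\<not>a) (\<not>a)" for a
  proof -
    have R: "rho_ET \<sigma> a a = (1/2) \<cdot>\<^sub>m kron (\<sigma> a a) proj0 + (1/2) \<cdot>\<^sub>m kron (\<sigma> (\<not>a) (\<not>a)) proj1"
      by (simp only: rho_ET_def)
    have U: "Um d True = kron (1\<^sub>m d) Xm" by (simp only: Um_def if_True)
    have "Um d True * rho_ET \<sigma> a a * Um d True =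
      (1/2) \<cdot>\<^sub>m (Um d True * kron (\<sigma> a a) proj0 * Um d True) +
      (1/2) \<cdot>\<^sub>m (Um d True * kron (\<sigma> (\<not>a) (\<not>a)) proj1 * Um d True)"
      unfolding R by (rule conj_lin[OF Um_carrier c1[OF proj0_carrier] c1[OF proj1_carrier]])
    also have "\<dots> = (1/2) \<cdot>\<^sub>m kron (\<sigma> a a) proj1 + (1/2) \<cdot>\<^sub>m kron (\<sigma> (\<not>a) (\<not>a)) proj0"
      unfolding U k[OF proj0_carrier] k[OF proj1_carrier] Xm_proj0 Xm_proj1 ..
    also have "\<dots> = (1/2) \<cdot>\<^sub>m kron (\<sigma> (\<not>a) (\<not>a)) proj0 + (1/2) \<cdot>\<^sub>m kron (\<sigma> a a) proj1"
      by (rule comm_add_mat[OF smult_carrier_mat[OF c1[OF proj1_carrier]] smult_carrier_mat[OF c1[OF proj0_carrier]]])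
    also have "\<dots> = rho_ET \<sigma> (\<not>a) (\<not>a)"
      by (simp only: rho_ET_def not_not)
    finally show ?thesis .
  qed
  have one: "Um d False * R * Um d False = R" if R: "R \<in> carrier_mat (d*2) (d*2)" for R
    unfolding Um_def if_False left_mult_one_mat[OF R] right_mult_one_mat[OF R] ..
  show "Um d m * rho_ET \<sigma> False False * Um d m = rho_ET \<sigma> m m"
  proof (cases m)
    case True then show ?thesis using gen[of False] by (simp only: not_False_eq_True)
  next
    case False then show ?thesis using one[OF rho_ET_carrier[OF sig]] by (simp only:)
  qed
  show "Um d m * rho_ET \<sigma> True True * Um d m = rho_ET \<sigma> (\<not>m) (\<not>m)"
  proof (cases m)
    case True then show ?thesis using gen[of True] by (simp only:)
  next
    case False then show ?thesis using one[OF rho_ET_carrier[OF sig]] by (simp only: not_False_eq_True)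
  qed
qed


lemma sum_lt2: "(\<Sum>a<(2::nat). f a) = f 0 + (f 1 :: complex)"
  by (simp add: numeral_2_eq_2)

lemma ptrace_block:
  fixes A B :: "complex mat"
  assumes A: "A \<in> carrier_mat N N" and B: "B \<in> carrier_mat N N"
  shows "ptrace_first 2 (c \<cdot>\<^sub>m kron proj0 A + e \<cdot>\<^sub>m kron proj1 B) = c \<cdot>\<^sub>m A + e \<cdot>\<^sub>m B"
proof -
  define M where "M = c \<cdot>\<^sub>m kron proj0 A + e \<cdot>\<^sub>m kron proj1 B"
  have K0: "kron proj0 A \<in> carrier_mat (2*N) (2*N)" by (rule kron_carrier'[OF proj0_carrier A])
  have K1: "kron proj1 B \<in> carrier_mat (2*N) (2*N)" by (rule kron_carrier'[OF proj1_carrier B])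
  have MC: "M \<in> carrier_mat (2*N) (2*N)" unfolding M_def
    by (rule add_carrier_mat[OF smult_carrier_mat[OF K1]])
  have dM: "dim_row M = 2*N" using MC by (auto dest: carrier_matD)
  have P: "ptrace_first 2 M = mat N N (\<lambda>(i, j). \<Sum>a<2. M $$ (a * N + i, a * N + j))"
    unfolding ptrace_first_def Let_def dM by simp
  have eM: "M $$ (p, q) = c * (proj0 $$ (p div N, q div N) * A $$ (p mod N, q mod N))
      + e * (proj1 $$ (p div N, q div N) * B $$ (p mod N, q mod N))" if "p < 2*N" "q < 2*N" for p q
  proof -
    have dA: "dim_row A = N" "dim_col A = N" "dim_row B = N" "dim_col B = N"
      using A B by (auto dest: carrier_matD)
    have d0: "dim_row proj0 = 2" "dim_col proj0 = 2" "dim_row proj1 = 2" "dim_col proj1 = 2"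
      by (simp_all add: proj0_def proj1_def)
    show ?thesis unfolding M_def using that K0 K1
      by (simp add: index_kron dA d0)
  qed
  have "ptrace_first 2 M = c \<cdot>\<^sub>m A + e \<cdot>\<^sub>m B"
  proof (rule eq_matI)
    fix i j assume "i < dim_row (c \<cdot>\<^sub>m A + e \<cdot>\<^sub>m B)" "j < dim_col (c \<cdot>\<^sub>m A + e \<cdot>\<^sub>m B)"
    then have i: "i < N" and j: "j < N" using A B by auto
    have f: "i div N = 0" "i mod N = i" "j div N = 0" "j mod N = j"
      "(N+i) div N = 1" "(N+i) mod N = i" "(N+j) div N = 1" "(N+j) mod N = j"
      using i j by simp_all
    have l: "i < 2*N" "j < 2*N" "N+i < 2*N" "N+j < 2*N" using i j by simp_all
    have p: "proj0 $$ (0,0) = 1" "proj0 $$ (1,1) = 0" "proj1 $$ (0,0) = 0" "proj1 $$ (1,1) = 1"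
      by (simp_all add: proj0_def proj1_def)
    have "ptrace_first 2 M $$ (i,j) = M $$ (i,j) + M $$ (N+i, N+j)"
      unfolding P using i j by (simp add: sum_lt2)
    also have "\<dots> = c * A $$ (i,j) + e * B $$ (i,j)"
      unfolding eM[OF l(1) l(2)] eM[OF l(3) l(4)] f p by simp
    also have "\<dots> = (c \<cdot>\<^sub>m A + e \<cdot>\<^sub>m B) $$ (i,j)" using A B i j by simp
    finally show "ptrace_first 2 M $$ (i,j) = (c \<cdot>\<^sub>m A + e \<cdot>\<^sub>m B) $$ (i,j)" .
  qed (use A B P in auto)
  then show ?thesis unfolding M_def .
qed

lemma vn_entropy_char_poly: "char_poly A = char_poly B \<Longrightarrow> vn_entropy A = vn_entropy B"
  unfolding vn_entropy_def eigvals_list_def by (simp only:)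


theorem lemma1:
  fixes \<sigma> :: "bool \<Rightarrow> bool \<Rightarrow> complex mat" and d k :: nat and ms :: "bool list"
  assumes "\<And>a b. density_op d (\<sigma> a b)"
    and "k \<ge> 1"
    and "length ms = k"
  shows "cond_entropy 2 (rho_tilde \<sigma> ms) = cond_entropy 2 (rho_bar \<sigma> k)"
proof -
  have sig: "\<And>a b. \<sigma> a b \<in> carrier_mat d d" using assms(1) by (simp add: density_op_def)
  define N where "N = (d*2) ^ length ms"
  define A where "A = kron_list (map (\<lambda>_. rho_ET \<sigma> False False) ms)"
  define B where "B = kron_list (map (\<lambda>_. rho_ET \<sigma> True True) ms)"
  define Q where "Q = kron_list (map (Um d) ms)"
  have AC: "A \<in> carrier_mat N N" unfolding A_def N_def
    by (rule kron_list_carrier[where f="\<lambda>_. rho_ET \<sigma> False False", OF rho_ET_carrier[OF sig]])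
  have BC: "B \<in> carrier_mat N N" unfolding B_def N_def
    by (rule kron_list_carrier[where f="\<lambda>_. rho_ET \<sigma> True True", OF rho_ET_carrier[OF sig]])
  have QC: "Q \<in> carrier_mat N N" unfolding Q_def N_def
    by (rule kron_list_carrier[OF Um_carrier])
  have QQ: "Q * Q = 1\<^sub>m N"
  proof -
    have "Q * Q = kron_list (map (\<lambda>m. Um d m * Um d m) ms)"
      unfolding Q_def by (rule kron_list_mult[OF Um_carrier Um_carrier])
    also have "\<dots> = kron_list (map (\<lambda>_. 1\<^sub>m (d*2)) ms)" unfolding Um_Um ..
    also have "\<dots> = 1\<^sub>m N" unfolding N_def by (rule kron_list_one)
    finally show ?thesis .
  qed
  have conjQ: "Q * kron_list (map (\<lambda>_. rho_ET \<sigma> x x) ms) * Q = kron_list (map (\<lambda>m. Um d m * rho_ET \<sigma> x x * Um d m) ms)" for x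
  proof -
    have "Q * kron_list (map (\<lambda>_. rho_ET \<sigma> x x) ms) = kron_list (map (\<lambda>m. Um d m * rho_ET \<sigma> x x) ms)"
      unfolding Q_def by (rule kron_list_mult[where g="\<lambda>_. rho_ET \<sigma> x x", OF Um_carrier rho_ET_carrier[OF sig]])
    also have "\<dots> * Q = kron_list (map (\<lambda>m. Um d m * rho_ET \<sigma> x x * Um d m) ms)"
      unfolding Q_def by (rule kron_list_mult[where f="\<lambda>m. Um d m * rho_ET \<sigma> x x", OF mult_carrier_mat[OF Um_carrier rho_ET_carrier[OF sig]] Um_carrier])
    finally show ?thesis .
  qed
  have QAQ: "Q * A * Q = kron_list (map (\<lambda>m. rho_ET \<sigma> m m) ms)"
    unfolding A_def conjQ Um_rho(1)[OF sig] ..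
  have QBQ: "Q * B * Q = kron_list (map (\<lambda>m. rho_ET \<sigma> (\<not>m) (\<not>m)) ms)"
    unfolding B_def conjQ Um_rho(2)[OF sig] ..
  have bar: "rho_bar \<sigma> k = (1/2) \<cdot>\<^sub>m kron proj0 A + (1/2) \<cdot>\<^sub>m kron proj1 B"
    unfolding rho_bar_def A_def B_def map_replicate_const assms(3) ..
  have tilde: "rho_tilde \<sigma> ms = (1/2) \<cdot>\<^sub>m kron proj0 (Q * A * Q) + (1/2) \<cdot>\<^sub>m kron proj1 (Q * B * Q)"
    unfolding rho_tilde_def QAQ QBQ ..
  define P where "P = kron (1\<^sub>m 2) Q"
  have PC: "P \<in> carrier_mat (2*N) (2*N)" unfolding P_def by (rule kron_carrier'[OF one_carrier_mat QC])
  have PP: "P * P = 1\<^sub>m (2*N)"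
    unfolding P_def kron_mult[OF one_carrier_mat QC one_carrier_mat QC] QQ
      left_mult_one_mat[OF one_carrier_mat] kron_one ..
  have K0: "kron proj0 A \<in> carrier_mat (2*N) (2*N)" by (rule kron_carrier'[OF proj0_carrier AC])
  have K1: "kron proj1 B \<in> carrier_mat (2*N) (2*N)" by (rule kron_carrier'[OF proj1_carrier BC])
  have barC: "rho_bar \<sigma> k \<in> carrier_mat (2*N) (2*N)" unfolding bar
    by (rule add_carrier_mat[OF smult_carrier_mat[OF K1]])
  have tildeC: "rho_tilde \<sigma> ms \<in> carrier_mat (2*N) (2*N)"
  proof -
    have "kron proj1 (Q * B * Q) \<in> carrier_mat (2*N) (2*N)"
      by (rule kron_carrier'[OF proj1_carrier mult_carrier_mat[OF mult_carrier_mat[OF QC BC] QC]])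
    then show ?thesis unfolding tilde by (rule add_carrier_mat[OF smult_carrier_mat])
  qed
  have sim1: "rho_tilde \<sigma> ms = P * rho_bar \<sigma> k * P"
  proof -
    have "P * rho_bar \<sigma> k * P = (1/2) \<cdot>\<^sub>m (P * kron proj0 A * P) + (1/2) \<cdot>\<^sub>m (P * kron proj1 B * P)"
      unfolding bar by (rule conj_lin[OF PC K0 K1])
    also have "\<dots> = (1/2) \<cdot>\<^sub>m kron proj0 (Q * A * Q) + (1/2) \<cdot>\<^sub>m kron proj1 (Q * B * Q)"
      unfolding P_def kron_conj[OF one_carrier_mat proj0_carrier QC AC] kron_conj[OF one_carrier_mat proj1_carrier QC BC]
        left_mult_one_mat[OF proj0_carrier] left_mult_one_mat[OF proj1_carrier]
        right_mult_one_mat[OF proj0_carrier] right_mult_one_mat[OF proj1_carrier] ..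
    finally show ?thesis unfolding tilde by simp
  qed
  have dt: "dim_row (rho_tilde \<sigma> ms) = 2*N" using tildeC by (auto dest: carrier_matD)
  have "similar_mat_wit (rho_tilde \<sigma> ms) (rho_bar \<sigma> k) P P"
    unfolding similar_mat_wit_def Let_def dt using tildeC barC PC PP sim1 by auto
  then have "similar_mat (rho_tilde \<sigma> ms) (rho_bar \<sigma> k)" unfolding similar_mat_def by blast
  then have e1: "vn_entropy (rho_tilde \<sigma> ms) = vn_entropy (rho_bar \<sigma> k)"
    by (intro vn_entropy_char_poly char_poly_similar)
  have pt_bar: "ptrace_first 2 (rho_bar \<sigma> k) = (1/2) \<cdot>\<^sub>m A + (1/2) \<cdot>\<^sub>m B"
    unfolding bar by (rule ptrace_block[OF AC BC])
  have pt_tilde: "ptrace_first 2 (rho_tilde \<sigma> ms) = (1/2) \<cdot>\<^sub>m (Q * A * Q) + (1/2) \<cdot>\<^sub>m (Q * B * Q)"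
    unfolding tilde by (rule ptrace_block[OF mult_carrier_mat[OF mult_carrier_mat[OF QC AC] QC] mult_carrier_mat[OF mult_carrier_mat[OF QC BC] QC]])
  have sim2: "ptrace_first 2 (rho_tilde \<sigma> ms) = Q * ptrace_first 2 (rho_bar \<sigma> k) * Q"
    unfolding pt_bar pt_tilde by (rule conj_lin[OF QC AC BC, symmetric])
  have ptbC: "ptrace_first 2 (rho_bar \<sigma> k) \<in> carrier_mat N N" unfolding pt_bar
    by (rule add_carrier_mat[OF smult_carrier_mat[OF BC]])
  have pttC: "ptrace_first 2 (rho_tilde \<sigma> ms) \<in> carrier_mat N N" unfolding sim2
    by (rule mult_carrier_mat[OF mult_carrier_mat[OF QC ptbC] QC])
  have dt2: "dim_row (ptrace_first 2 (rho_tilde \<sigma> ms)) = N" using pttC by (auto dest: carrier_matD)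
  have "similar_mat_wit (ptrace_first 2 (rho_tilde \<sigma> ms)) (ptrace_first 2 (rho_bar \<sigma> k)) Q Q"
    unfolding similar_mat_wit_def Let_def dt2 using pttC ptbC QC QQ sim2 by auto
  then have "similar_mat (ptrace_first 2 (rho_tilde \<sigma> ms)) (ptrace_first 2 (rho_bar \<sigma> k))"
    unfolding similar_mat_def by blast
  then have e2: "vn_entropy (ptrace_first 2 (rho_tilde \<sigma> ms)) = vn_entropy (ptrace_first 2 (rho_bar \<sigma> k))"
    by (intro vn_entropy_char_poly char_poly_similar)
  show ?thesis unfolding cond_entropy_def e1 e2 ..
qed

end
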